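(* Let $s\ge1$. The expected number of pierced circles in a random meander graph $\Gamma^1_{2s-1}$ is $\frac{O(s,1)}{C_s^2}$, where $O(s,1)=\binom{2s-2}{1}C_{s-1}^2=(2s-2)C_{s-1}^2$.
   Context: A $p$-string of length $s$ is a correctly matched (balanced) string of $s$ left and $s$ right parentheses; there are $C_s=\frac{1}{s+1}\binom{2s}{s}$ (Catalan number) of them. Given two $p$-strings $U$ (upper) and $W$ (lower) of length $s$, the meander graph $\Gamma^1_{2s-1}$ is obtained by marking points $0,1,\dots,2s$ on the $x$-axis, taking the segment $[0,2s]$, joining points $a,b$ by a semicircle in the upper half-plane for each matched pair of $U$ at positions $a<b$ (positions $1,\dots,2s$), and joining points $a-1,b-1$ by a semicircle in the lower half-plane for each matched pair of $W$ at positions $a<b$; the vertices are the points $1,\dots,2s-1$. The graph has a pierced circle at position $i$ ($1\le i\le 2s-2$) if the vertices $i$ and $i+1$ are joined both by an upper semicircle and by a lower semicircle. A random meander graph is obtained by choosing $(U,W)$ uniformly among the $C_s^2$ pairs. *)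

theory Defs
  imports Complex_Main
begin

text \<open>A parenthesis string is a list of booleans: True = left parenthesis, False = right.\<close>

definition nlefts :: "bool list \<Rightarrow> nat" where
  "nlefts xs = length (filter id xs)"

definition nrights :: "bool list \<Rightarrow> nat" where
  "nrights xs = length (filter Not xs)"

definition balanced :: "bool list \<Rightarrow> bool" where
  "balanced xs \<longleftrightarrow> (\<forall>k \<le> length xs. nrights (take k xs) \<le> nlefts (take k xs))
                     \<and> nlefts xs = nrights xs"

definition pstrings :: "nat \<Rightarrow> bool list set" where
  "pstrings s = {w. length w = 2 * s \<and> balanced w}"

definition matched :: "bool list \<Rightarrow> nat \<Rightarrow> nat \<Rightarrow> bool" where
  "matched w a b \<longleftrightarrow> 1 \<le> a \<and> a < b \<and> b \<le> length w \<and> w ! (a - 1) \<and> \<not> w ! (b - 1)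
     \<and> balanced (take (b - a - 1) (drop a w))"

text \<open>Pierced circle at position i of the meander graph of (U, W): vertices i, i+1 are joined
  by an upper semicircle (pair (i,i+1) of U) and a lower semicircle (pair (i+1,i+2) of W,
  drawn between points i and i+1).\<close>
definition pierced :: "nat \<Rightarrow> bool list \<Rightarrow> bool list \<Rightarrow> nat \<Rightarrow> bool" where
  "pierced s U W i \<longleftrightarrow> 1 \<le> i \<and> i \<le> 2 * s - 2 \<and> matched U i (i + 1) \<and> matched W (i + 1) (i + 2)"

definition num_pierced :: "nat \<Rightarrow> bool list \<Rightarrow> bool list \<Rightarrow> nat" where
  "num_pierced s U W = card {i. pierced s U W i}"

definition expected_pierced :: "nat \<Rightarrow> real" where
  "expected_pierced s =
     (\<Sum>p \<in> pstrings s \<times> pstrings s. real (num_pierced s (fst p) (snd p)))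
       / real (card (pstrings s \<times> pstrings s))"

definition catalan :: "nat \<Rightarrow> real" where
  "catalan s = real ((2 * s) choose s) / real (s + 1)"

end

theory Submission
  imports Defs
begin

lemma nlefts_simps[simp]: "nlefts [] = 0" "nlefts (x#w) = (if x then Suc (nlefts w) else nlefts w)"
  "nlefts (v @ w) = nlefts v + nlefts w"
  by (auto simp: nlefts_def)

lemma nrights_simps[simp]: "nrights [] = 0" "nrights (x#w) = (if x then nrights w else Suc (nrights w))"
  "nrights (v @ w) = nrights v + nrights w"
  by (auto simp: nrights_def)

lemma length_lr: "length w = nlefts w + nrights w"
  by (induction w) auto

definition pre_ok :: "nat \<Rightarrow> bool list \<Rightarrow> bool" where
  "pre_ok h w \<longleftrightarrow> (\<forall>k\<le>length w. nrights (take k w) \<le> h + nlefts (take k w))"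

lemma all_le_Suc: "(\<forall>k\<le>Suc n. Q k) \<longleftrightarrow> Q 0 \<and> (\<forall>k\<le>n. Q (Suc k))"
  by (metis Suc_le_mono not0_implies_Suc zero_le)

lemma pre_ok_Nil[simp]: "pre_ok h []"
  by (simp add: pre_ok_def)

lemma pre_ok_Cons[simp]: "pre_ok h (x#w) \<longleftrightarrow> (if x then pre_ok (Suc h) w else 1 \<le> h \<and> pre_ok (h-1) w)"
proof -
  have "pre_ok h (x#w) \<longleftrightarrow> (\<forall>k\<le>length w. nrights (x # take k w) \<le> h + nlefts (x # take k w))"
    unfolding pre_ok_def by (simp only: length_Cons all_le_Suc take_Suc_Cons) simp
  also have "\<dots> \<longleftrightarrow> (if x then pre_ok (Suc h) w else 1 \<le> h \<and> pre_ok (h-1) w)"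
  proof (cases x)
    case True then show ?thesis unfolding pre_ok_def by simp
  next
    case False
    have "(\<forall>k\<le>length w. Suc (nrights (take k w)) \<le> h + nlefts (take k w)) \<longleftrightarrow>
          1 \<le> h \<and> (\<forall>k\<le>length w. nrights (take k w) \<le> h - 1 + nlefts (take k w))"
    proof
      assume a: "\<forall>k\<le>length w. Suc (nrights (take k w)) \<le> h + nlefts (take k w)"
      then have "1 \<le> h" using spec[OF a, of 0] by simp
      then show "1 \<le> h \<and> (\<forall>k\<le>length w. nrights (take k w) \<le> h - 1 + nlefts (take k w))"
        using a by force
    qed force
    then show ?thesis using False unfolding pre_ok_def by simp
  qed
  finally show ?thesis .
qed

lemma pre_ok_insert: "pre_ok h (xs @ True # False # ys) \<longleftrightarrow> pre_ok h (xs @ ys)"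
  by (induction xs arbitrary: h) auto

lemma pre_ok_snoc: "pre_ok h (v @ [x]) \<longleftrightarrow> pre_ok h v \<and> nrights (v @ [x]) \<le> h + nlefts (v @ [x])"
  by (induction v arbitrary: h) auto

lemma balanced_iff: "balanced w \<longleftrightarrow> pre_ok 0 w \<and> nlefts w = nrights w"
  by (simp add: balanced_def pre_ok_def)

definition Dset :: "nat \<Rightarrow> nat \<Rightarrow> bool list set" where
  "Dset a b = {w. nlefts w = a \<and> nrights w = b \<and> pre_ok 0 w}"

lemma finite_Dset: "finite (Dset a b)"
proof -
  have "Dset a b \<subseteq> {w. length w = a + b}" by (auto simp: Dset_def length_lr)
  then show ?thesis using finite_subset finite_list_length by blast
qed

lemma pre_ok_total: "pre_ok h w \<Longrightarrow> nrights w \<le> h + nlefts w"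
  unfolding pre_ok_def by (metis order_refl take_all)

lemma Dset_gt: "a < b \<Longrightarrow> Dset a b = {}"
  by (auto simp: Dset_def dest: pre_ok_total)

lemma Dset_00: "Dset 0 0 = {[]}"
  by (auto simp: Dset_def) (metis add_0 length_0_conv length_lr)

lemma Dset_step:
  assumes "b \<le> a" "0 < a + b"
  shows "Dset a b = (if 0 < a then (\<lambda>v. v @ [True]) ` Dset (a-1) b else {})
                  \<union> (if 0 < b then (\<lambda>v. v @ [False]) ` Dset a (b-1) else {})"
proof (rule equalityI)
  let ?R = "(if 0 < a then (\<lambda>v. v @ [True]) ` Dset (a-1) b else {})
                  \<union> (if 0 < b then (\<lambda>v. v @ [False]) ` Dset a (b-1) else {})"
  show "Dset a b \<subseteq> ?R"
  proof
    fix w assume w: "w \<in> Dset a b"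
    then have "w \<noteq> []" using assms by (auto simp: Dset_def)
    then obtain v x where vx: "w = v @ [x]" by (metis rev_exhaust)
    show "w \<in> ?R"
    proof (cases x)
      case True
      then have "v \<in> Dset (a-1) b" "0 < a" using w vx by (auto simp: Dset_def pre_ok_snoc)
      then show ?thesis using vx True by auto
    next
      case False
      then have "v \<in> Dset a (b-1)" "0 < b" using w vx by (auto simp: Dset_def pre_ok_snoc)
      then show ?thesis using vx False by auto
    qed
  qed
  show "?R \<subseteq> Dset a b"
    using assms by (auto simp: Dset_def pre_ok_snoc split: if_splits)
qed

lemma card_Dset_step:
  assumes "b \<le> a" "0 < a + b"
  shows "card (Dset a b) = (if 0 < a then card (Dset (a-1) b) else 0)
                  + (if 0 < b then card (Dset a (b-1)) else 0)"
proof -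
  have i1: "inj (\<lambda>v::bool list. v @ [True])" "inj (\<lambda>v::bool list. v @ [False])"
    by (auto intro: injI)
  have d: "(\<lambda>v. v @ [True]) ` Dset (a-1) b \<inter> (\<lambda>v. v @ [False]) ` Dset a (b-1) = {}"
    by auto
  have c1: "card ((\<lambda>v. v @ [True]) ` Dset (a-1) b) = card (Dset (a-1) b)"
    by (rule card_image) (auto intro: inj_onI)
  have c2: "card ((\<lambda>v. v @ [False]) ` Dset a (b-1)) = card (Dset a (b-1))"
    by (rule card_image) (auto intro: inj_onI)
  have f: "finite ((\<lambda>v. v @ [True]) ` Dset (a-1) b)" "finite ((\<lambda>v. v @ [False]) ` Dset a (b-1))"
    using finite_Dset by auto
  show ?thesis
    apply (subst Dset_step[OF assms])
    apply (cases "0 < a"; cases "0 < b")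
    by (simp_all only: if_True if_False Un_empty_left Un_empty_right card_Un_disjoint[OF f d] c1 c2
        card.empty add_0 add_0_right)
qed

definition gD :: "nat \<Rightarrow> nat \<Rightarrow> int" where
  "gD a b = (if b = 0 then 1 else int ((a+b) choose b) - int ((a+b) choose (b-1)))"

lemma card_Dset: "b \<le> a + 1 \<Longrightarrow> int (card (Dset a b)) = gD a b"
proof (induction "a + b" arbitrary: a b rule: less_induct)
  case less
  show ?case
  proof (cases "b = a + 1")
    case True
    have "(a + b choose b) = (a + b choose (a + b - b))"
      using True by (intro binomial_symmetric) simp
    also have "a + b - b = b - 1" using True by simp
    finally have "(a + b choose b) = (a + b choose (b - 1))" .
    then show ?thesis using True Dset_gt[of a b] by (simp add: gD_def)
  next
    case False
    then have ba: "b \<le> a" using less.prems by simp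
    show ?thesis
    proof (cases "a + b = 0")
      case True then show ?thesis by (simp add: Dset_00 gD_def)
    next
      case False
      then have a0: "0 < a" using ba by linarith
      show ?thesis
      proof (cases "b = 0")
        case True
        then show ?thesis using card_Dset_step[OF ba] a0 less.hyps[of "a-1" 0]
          by (simp add: gD_def)
      next
        case False
        then obtain c where c: "b = Suc c" by (cases b) auto
        obtain m where m: "a = Suc m" using a0 by (cases a) auto
        have "int (card (Dset a b)) = int (card (Dset (a-1) b)) + int (card (Dset a (b-1)))"
          using card_Dset_step[OF ba] a0 False by simp
        also have "\<dots> = gD (a-1) b + gD a (b-1)"
          using less.hyps[of "a-1" b] less.hyps[of a "b-1"] a0 False ba by simp
        also have "\<dots> = gD a b"
        proof (cases c)
          case 0
          then show ?thesis using c m by (simp add: gD_def)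
        next
          case (Suc d)
          define n where "n = m + Suc (Suc d)"
          have e1: "(Suc n choose Suc (Suc d)) = (n choose Suc d) + (n choose Suc (Suc d))"
            by (rule binomial_Suc_Suc)
          have e2: "(Suc n choose Suc d) = (n choose d) + (n choose Suc d)"
            by (rule binomial_Suc_Suc)
          have g1: "gD (a-1) b = int (n choose Suc (Suc d)) - int (n choose Suc d)"
            unfolding gD_def using c m Suc by (simp add: n_def)
          have g2: "gD a (b-1) = int (n choose Suc d) - int (n choose d)"
            unfolding gD_def using c m Suc by (simp add: n_def)
          have g3: "gD a b = int (Suc n choose Suc (Suc d)) - int (Suc n choose Suc d)"
            unfolding gD_def using c m Suc by (simp add: n_def)
          show ?thesis unfolding g1 g2 g3 e1 e2 by simp
        qed
        finally show ?thesis .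
      qed
    qed
  qed
qed

lemma pstrings_Dset: "pstrings s = Dset s s"
  by (auto simp: pstrings_def Dset_def balanced_iff length_lr)

lemma card_pstrings: "real (card (pstrings s)) = catalan s"
proof (cases s)
  case 0
  then show ?thesis using card_Dset[of 0 0] by (simp add: pstrings_Dset gD_def catalan_def)
next
  case (Suc n)
  have i: "int (card (pstrings s)) = int ((2*s) choose s) - int ((2*s) choose n)"
    using card_Dset[of s s] Suc by (simp add: pstrings_Dset gD_def mult_2)
  have k: "Suc n * (2*s choose Suc n) = Suc s * (2*s choose n)"
    using Suc_times_binomial_add[of n s] Suc by (simp add: mult_2)
  have r: "real (card (pstrings s)) = real ((2*s) choose s) - real ((2*s) choose n)"
    using i by (metis of_int_diff of_int_of_nat_eq)
  have k': "real (Suc n) * real (2*s choose s) = real (Suc s) * real (2*s choose n)"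
    using k Suc by (metis of_nat_mult)
  show ?thesis unfolding r catalan_def using k' Suc
    by (simp add: field_simps)
qed

lemma nlefts_take_drop: "nlefts (take j v) + nlefts (drop j v) = nlefts v"
  by (metis nlefts_simps(3) append_take_drop_id)

lemma nrights_take_drop: "nrights (take j v) + nrights (drop j v) = nrights v"
  by (metis nrights_simps(3) append_take_drop_id)

lemma ins_balanced: "balanced (take j v @ True # False # drop j v) \<longleftrightarrow> balanced v"
proof -
  have "pre_ok 0 (take j v @ True # False # drop j v) \<longleftrightarrow> pre_ok 0 v"
    by (simp add: pre_ok_insert)
  moreover have "nlefts (take j v @ True # False # drop j v) = Suc (nlefts v)"
    using nlefts_take_drop[of j v] by simp
  moreover have "nrights (take j v @ True # False # drop j v) = Suc (nrights v)"
    using nrights_take_drop[of j v] by simp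
  ultimately show ?thesis by (simp add: balanced_iff)
qed

lemma card_S:
  assumes s: "1 \<le> s" and j: "j + 2 \<le> 2 * s"
  shows "card {U \<in> pstrings s. U ! j \<and> \<not> U ! Suc j} = card (pstrings (s - 1))"
proof -
  define ins where "ins v = take j v @ True # False # drop j v" for v :: "bool list"
  have inj: "inj_on ins (pstrings (s - 1))"
  proof (rule inj_onI)
    fix v v' assume v: "v \<in> pstrings (s-1)" and v': "v' \<in> pstrings (s-1)" and e: "ins v = ins v'"
    have lv: "length v = 2*s - 2" "length v' = 2*s - 2" using v v' s by (auto simp: pstrings_def)
    have "take j v = take j v' \<and> True # False # drop j v = True # False # drop j v'"
      using e unfolding ins_def using lv j by (intro iffD1[OF append_eq_append_conv]) auto
    then show "v = v'" by (metis append_take_drop_id list.inject)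
  qed
  have img: "ins ` pstrings (s - 1) = {U \<in> pstrings s. U ! j \<and> \<not> U ! Suc j}"
  proof (rule equalityI)
    show "ins ` pstrings (s - 1) \<subseteq> {U \<in> pstrings s. U ! j \<and> \<not> U ! Suc j}"
    proof
      fix U assume "U \<in> ins ` pstrings (s - 1)"
      then obtain v where v: "v \<in> pstrings (s-1)" and U: "U = ins v" by blast
      have lv: "length v = 2*s - 2" "balanced v" using v s by (auto simp: pstrings_def)
      have "length U = 2 * s" using lv j s unfolding U ins_def by simp
      moreover have "balanced U" using lv unfolding U ins_def by (simp add: ins_balanced)
      moreover have "U ! j" "\<not> U ! Suc j" using lv j unfolding U ins_def by (auto simp: nth_append)
      ultimately show "U \<in> {U \<in> pstrings s. U ! j \<and> \<not> U ! Suc j}" by (simp add: pstrings_def)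
    qed
    show "{U \<in> pstrings s. U ! j \<and> \<not> U ! Suc j} \<subseteq> ins ` pstrings (s - 1)"
    proof
      fix U assume "U \<in> {U \<in> pstrings s. U ! j \<and> \<not> U ! Suc j}"
      then have U: "length U = 2 * s" "balanced U" "U ! j" "\<not> U ! Suc j" by (auto simp: pstrings_def)
      define v where "v = take j U @ drop (Suc (Suc j)) U"
      have tv: "take j v = take j U" using U j by (simp add: v_def)
      have dv: "drop j v = drop (Suc (Suc j)) U" using U j by (simp add: v_def)
      have "U = take j U @ U ! j # U ! Suc j # drop (Suc (Suc j)) U"
        using U j by (metis Cons_nth_drop_Suc Suc_le_lessD add_2_eq_Suc' append_take_drop_id le_eq_less_or_eq
            lessI less_le_trans)
      then have Ui: "U = ins v" unfolding ins_def tv dv using U by simp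
      have "length v = 2 * (s - 1)" using U j s by (simp add: v_def)
      moreover have "balanced v" using U Ui ins_balanced unfolding ins_def by metis
      ultimately have "v \<in> pstrings (s-1)" by (simp add: pstrings_def)
      then show "U \<in> ins ` pstrings (s - 1)" using Ui by blast
    qed
  qed
  show ?thesis using card_image[OF inj] img by simp
qed

lemma matched_adj:
  assumes "length U = 2 * s" "1 \<le> i" "i + 1 \<le> 2 * s"
  shows "matched U i (i + 1) \<longleftrightarrow> U ! (i - 1) \<and> \<not> U ! i"
  using assms by (simp add: matched_def balanced_def)

lemma card_filter_sum: "finite A \<Longrightarrow> card {x \<in> A. Q x} = (\<Sum>x\<in>A. if Q x then 1 else 0)"
  by (simp add: sum.If_cases Int_def)

theorem proposition3p5:
  fixes s :: nat
  assumes "s \<ge> 1"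
  shows "expected_pierced s = real (2 * s - 2) * (catalan (s - 1))^2 / (catalan s)^2"
proof -
  define P where "P = pstrings s"
  define I where "I = {1..2 * s - 2}"
  define c' where "c' = card (pstrings (s - 1))"
  define f where "f U i = (if matched U i (i + 1) then 1 else 0 :: nat)" for U i
  define g where "g W i = (if matched W (i + 1) (i + 2) then 1 else 0 :: nat)" for W i
  have finP: "finite P" unfolding P_def pstrings_Dset by (rule finite_Dset)
  have np: "num_pierced s U W = (\<Sum>i\<in>I. f U i * g W i)" for U W
  proof -
    have "{i. pierced s U W i} = {i \<in> I. matched U i (i + 1) \<and> matched W (i + 1) (i + 2)}"
      by (auto simp: pierced_def I_def)
    moreover have "card {i \<in> I. matched U i (i + 1) \<and> matched W (i + 1) (i + 2)} = (\<Sum>i\<in>I. f U i * g W i)"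
      unfolding f_def g_def by (subst card_filter_sum) (auto simp: I_def intro: sum.cong)
    ultimately show ?thesis unfolding num_pierced_def by simp
  qed
  have cf: "(\<Sum>U\<in>P. f U i) = c'" if "i \<in> I" for i
  proof -
    have "(\<Sum>U\<in>P. f U i) = card {U \<in> P. matched U i (i + 1)}"
      by (simp add: card_filter_sum finP f_def)
    also have "{U \<in> P. matched U i (i + 1)} = {U \<in> pstrings s. U ! (i - 1) \<and> \<not> U ! Suc (i - 1)}"
      using that matched_adj[of _ s i] by (auto simp: P_def I_def pstrings_def)
    also have "card \<dots> = c'" unfolding c'_def
      using that assms by (intro card_S) (auto simp: I_def)
    finally show ?thesis .
  qed
  have cg: "(\<Sum>W\<in>P. g W i) = c'" if "i \<in> I" for i
  proof -
    have "(\<Sum>W\<in>P. g W i) = card {W \<in> P. matched W (i + 1) (i + 1 + 1)}"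
      by (simp add: card_filter_sum finP g_def numeral_2_eq_2)
    also have "{W \<in> P. matched W (i + 1) (i + 1 + 1)} = {W \<in> pstrings s. W ! i \<and> \<not> W ! Suc i}"
      using that matched_adj[of _ s "i + 1"] by (auto simp: P_def I_def pstrings_def)
    also have "card \<dots> = c'" unfolding c'_def
      using that assms by (intro card_S) (auto simp: I_def)
    finally show ?thesis .
  qed
  have tot: "(\<Sum>p\<in>P \<times> P. num_pierced s (fst p) (snd p)) = card I * c' * c'"
  proof -
    have "(\<Sum>p\<in>P \<times> P. num_pierced s (fst p) (snd p)) = (\<Sum>U\<in>P. \<Sum>W\<in>P. \<Sum>i\<in>I. f U i * g W i)"
      unfolding np sum.cartesian_product[of "\<lambda>U W. \<Sum>i\<in>I. f U i * g W i"]
      by (simp add: case_prod_beta')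
    also have "\<dots> = (\<Sum>i\<in>I. \<Sum>U\<in>P. \<Sum>W\<in>P. f U i * g W i)"
      by (subst sum.swap[of _ P I], rule sum.cong[OF refl], rule sum.swap)
    also have "\<dots> = (\<Sum>i\<in>I. (\<Sum>U\<in>P. f U i) * (\<Sum>W\<in>P. g W i))"
      by (simp add: sum_product)
    also have "\<dots> = (\<Sum>i\<in>I. c' * c')"
      using cf cg by simp
    finally show ?thesis by simp
  qed
  have cI: "card I = 2 * s - 2" by (simp add: I_def)
  have "expected_pierced s = real (card I * c' * c') / real (card P * card P)"
    unfolding expected_pierced_def P_def[symmetric] card_cartesian_product
    by (simp only: of_nat_sum[symmetric] tot)
  also have "\<dots> = real (2 * s - 2) * (catalan (s - 1))^2 / (catalan s)^2"
    unfolding cI c'_def P_def of_nat_mult card_pstrings by (simp add: power2_eq_square)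
  finally show ?thesis .
qed

end
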